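(* Let $\gamma\to_d\gamma'$ be a d-step. Then: (i) if the step is smooth, then $NS_\gamma(k)=NS_{\gamma'}(k)$ for every integer $k$; (ii) if the step is non-smooth, then with $k^*=\min\{\mathrm{rank}_\gamma(p,q) : (p,q)\in\mathrm{Edges},\ (p,q)\text{ non-smooth in }\gamma,\ \gamma'.p.d\ne\gamma.p.d \text{ or } \gamma'.q.d\neq\gamma.q.d\}$, we have (a) $NS_\gamma(k)=NS_{\gamma'}(k)$ for every integer $k<k^*$, and (b) $NS_{\gamma'}(k^* )\subsetneq NS_\gamma(k^* )$.
   Context: Let $G$ be a finite, connected, undirected graph with node set $V$ and a distinguished node $r$ (the root); $\mathrm{Edges}=\{(p,q)\in V\times V : p,q\text{ adjacent}\}$ (both orientations). Each node $p$ has a fixed ordered list $N(p)$ of its neighbours. A configuration $\gamma$ assigns to each node $p$ a value $\gamma.p.d\in\mathbb N$ and a neighbour $\gamma.p.par\in N(p)$. For a non-root $p$ let $Dist_p(\gamma)=\min\{\gamma.q.d+1 : q\in N(p)\}$. Algorithm BFS: Root enabled iff $\gamma.r.d\neq 0$, executing sets $r.d:=0$. Non-root $p$, action CD: enabled iff $\gamma.p.d\ne Dist_p(\gamma)$, executing sets $p.d:=Dist_p(\gamma)$. Non-root $p$, action CP: enabled iff $\gamma.p.d=Dist_p(\gamma)$ and $\gamma.q_0.d+1\neq\gamma.p.d$ with $q_0=\gamma.p.par$; executing sets $p.par$ to the first $q\in N(p)$ with $\gamma.q.d+1=\gamma.p.d$. A step $\gamma\to\gamma'$ holds iff a nonempty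 set $S$ of enabled nodes simultaneously execute their enabled action (evaluated in $\gamma$), others unchanged. A d-step $\gamma\to_d\gamma'$ is a step with $\gamma.r.d=\gamma'.r.d$ and $\gamma.p.d\neq\gamma'.p.d$ for some $p$. An edge $(p,q)$ is smooth in $\gamma$ if $|\gamma.p.d-\gamma.q.d|\le 1$, non-smooth otherwise. A d-step $\gamma\to_d\gamma'$ is smooth if every node $p$ with $\gamma'.p.d\neq\gamma.p.d$ has all its edges $(p,q)$, $q\in N(p)$, smooth in $\gamma$; otherwise it is non-smooth. $\mathrm{rank}_\gamma(p,q)=\min(\gamma.p.d,\gamma.q.d)$. $NS_\gamma(k)=\{e\in\mathrm{Edges} : e \text{ non-smooth in }\gamma,\ \mathrm{rank}_\gamma(e)=k\}$. *)

theory Defs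
  imports Main
begin

record 'v config =
  d :: "'v \<Rightarrow> nat"
  par :: "'v \<Rightarrow> 'v"

definition graph_edges :: "'v set \<Rightarrow> ('v \<Rightarrow> 'v list) \<Rightarrow> ('v \<times> 'v) set" where
  "graph_edges V N = {(p, q). p \<in> V \<and> q \<in> set (N p)}"

definition bfs_graph :: "'v set \<Rightarrow> ('v \<Rightarrow> 'v list) \<Rightarrow> 'v \<Rightarrow> bool" where
  "bfs_graph V N r \<longleftrightarrow>
     finite V \<and> r \<in> V \<and>
     (\<forall>p\<in>V. distinct (N p) \<and> set (N p) \<subseteq> V \<and> p \<notin> set (N p)) \<and>
     (\<forall>p\<in>V. \<forall>q\<in>V. q \<in> set (N p) \<longleftrightarrow> p \<in> set (N q)) \<and>
     (\<forall>p\<in>V. (r, p) \<in> (graph_edges V N)\<^sup>*)"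

definition valid_config :: "'v set \<Rightarrow> ('v \<Rightarrow> 'v list) \<Rightarrow> 'v config \<Rightarrow> bool" where
  "valid_config V N \<gamma> \<longleftrightarrow> (\<forall>p\<in>V. par \<gamma> p \<in> set (N p))"

definition Dist :: "('v \<Rightarrow> 'v list) \<Rightarrow> 'v config \<Rightarrow> 'v \<Rightarrow> nat" where
  "Dist N \<gamma> p = Min {d \<gamma> q + 1 | q. q \<in> set (N p)}"

definition enabled_CD :: "('v \<Rightarrow> 'v list) \<Rightarrow> 'v config \<Rightarrow> 'v \<Rightarrow> bool" where
  "enabled_CD N \<gamma> p \<longleftrightarrow> d \<gamma> p \<noteq> Dist N \<gamma> p"

definition enabled_CP :: "('v \<Rightarrow> 'v list) \<Rightarrow> 'v config \<Rightarrow> 'v \<Rightarrow> bool" where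
  "enabled_CP N \<gamma> p \<longleftrightarrow> d \<gamma> p = Dist N \<gamma> p \<and> d \<gamma> (par \<gamma> p) + 1 \<noteq> d \<gamma> p"

definition enabled :: "('v \<Rightarrow> 'v list) \<Rightarrow> 'v \<Rightarrow> 'v config \<Rightarrow> 'v \<Rightarrow> bool" where
  "enabled N r \<gamma> p \<longleftrightarrow>
     (if p = r then d \<gamma> r \<noteq> 0 else enabled_CD N \<gamma> p \<or> enabled_CP N \<gamma> p)"

definition exec :: "('v \<Rightarrow> 'v list) \<Rightarrow> 'v \<Rightarrow> 'v config \<Rightarrow> 'v \<Rightarrow> nat \<times> 'v" where
  "exec N r \<gamma> p =
     (if p = r then (0, par \<gamma> p)
      else if enabled_CD N \<gamma> p then (Dist N \<gamma> p, par \<gamma> p)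
      else (d \<gamma> p, the (find (\<lambda>q. d \<gamma> q + 1 = d \<gamma> p) (N p))))"

definition step :: "'v set \<Rightarrow> ('v \<Rightarrow> 'v list) \<Rightarrow> 'v \<Rightarrow> 'v config \<Rightarrow> 'v config \<Rightarrow> bool" where
  "step V N r \<gamma> \<gamma>' \<longleftrightarrow>
     (\<exists>S. S \<noteq> {} \<and> S \<subseteq> V \<and> (\<forall>p\<in>S. enabled N r \<gamma> p) \<and>
        (\<forall>p. if p \<in> S then (d \<gamma>' p, par \<gamma>' p) = exec N r \<gamma> p
              else d \<gamma>' p = d \<gamma> p \<and> par \<gamma>' p = par \<gamma> p))"

definition d_step :: "'v set \<Rightarrow> ('v \<Rightarrow> 'v list) \<Rightarrow> 'v \<Rightarrow> 'v config \<Rightarrow> 'v config \<Rightarrow> bool" where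
  "d_step V N r \<gamma> \<gamma>' \<longleftrightarrow>
     step V N r \<gamma> \<gamma>' \<and> d \<gamma> r = d \<gamma>' r \<and> (\<exists>p\<in>V. d \<gamma> p \<noteq> d \<gamma>' p)"

definition smooth_edge :: "'v config \<Rightarrow> 'v \<times> 'v \<Rightarrow> bool" where
  "smooth_edge \<gamma> e \<longleftrightarrow> (case e of (p, q) \<Rightarrow> d \<gamma> p \<le> d \<gamma> q + 1 \<and> d \<gamma> q \<le> d \<gamma> p + 1)"

definition smooth_d_step :: "('v \<Rightarrow> 'v list) \<Rightarrow> 'v set \<Rightarrow> 'v config \<Rightarrow> 'v config \<Rightarrow> bool" where
  "smooth_d_step N V \<gamma> \<gamma>' \<longleftrightarrow>
     (\<forall>p\<in>V. d \<gamma>' p \<noteq> d \<gamma> p \<longrightarrow> (\<forall>q\<in>set (N p). smooth_edge \<gamma> (p, q)))"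

definition rank :: "'v config \<Rightarrow> 'v \<times> 'v \<Rightarrow> nat" where
  "rank \<gamma> e = (case e of (p, q) \<Rightarrow> min (d \<gamma> p) (d \<gamma> q))"

definition NS :: "'v set \<Rightarrow> ('v \<Rightarrow> 'v list) \<Rightarrow> 'v config \<Rightarrow> int \<Rightarrow> ('v \<times> 'v) set" where
  "NS V N \<gamma> k = {e \<in> graph_edges V N. \<not> smooth_edge \<gamma> e \<and> int (rank \<gamma> e) = k}"

end

theory Submission
  imports Defs
begin

lemma key_or:
  fixes \<gamma> \<gamma>' :: "'v config"
  assumes E: "\<And>p q. (p,q) \<in> graph_edges V N \<longleftrightarrow> p \<in> V \<and> q \<in> set (N p)"
    and sym: "\<And>p q. (p,q) \<in> graph_edges V N \<Longrightarrow> (q,p) \<in> graph_edges V N"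
    and ch: "\<And>p. d \<gamma>' p \<noteq> d \<gamma> p \<Longrightarrow> p \<in> V \<and> (\<forall>q\<in>set (N p). d \<gamma>' p \<le> d \<gamma> q + 1)
                 \<and> (\<exists>q\<in>set (N p). d \<gamma>' p = d \<gamma> q + 1)"
    and pq: "(p,q) \<in> graph_edges V N"
    and gt: "d \<gamma>' q \<ge> d \<gamma>' p + 2"
    and chg: "d \<gamma>' p \<noteq> d \<gamma> p \<or> d \<gamma>' q \<noteq> d \<gamma> q"
  shows "\<exists>x y. (x,y) \<in> graph_edges V N \<and> \<not> smooth_edge \<gamma> (x,y)
           \<and> (d \<gamma>' x \<noteq> d \<gamma> x \<or> d \<gamma>' y \<noteq> d \<gamma> y) \<and> rank \<gamma> (x,y) < d \<gamma>' p"
proof (cases "d \<gamma>' p = d \<gamma> p")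
  case True
  then have qc: "d \<gamma>' q \<noteq> d \<gamma> q" using chg by auto
  have "(q,p) \<in> graph_edges V N" using sym pq by auto
  then have "p \<in> set (N q)" using E by auto
  then have "d \<gamma>' q \<le> d \<gamma> p + 1" using ch[OF qc] by auto
  then show ?thesis using True gt by auto
next
  case False
  note pc = False
  obtain s where s: "s \<in> set (N p)" "d \<gamma>' p = d \<gamma> s + 1" using ch[OF pc] by auto
  have pV: "p \<in> V" using ch[OF pc] by auto
  have ps: "(p,s) \<in> graph_edges V N" using E pV s by auto
  show ?thesis
  proof (cases "d \<gamma> p \<ge> d \<gamma> s + 2")
    case True
    then show ?thesis using ps pc s
      by (intro exI[of _ p] exI[of _ s]) (auto simp: smooth_edge_def rank_def)
  next
    case False
    then have le: "d \<gamma> p \<le> d \<gamma> s" using pc s by auto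
    show ?thesis
    proof (cases "d \<gamma>' q = d \<gamma> q")
      case True
      then show ?thesis using pq pc s le gt
        by (intro exI[of _ p] exI[of _ q]) (auto simp: smooth_edge_def rank_def)
    next
      case False
      have "(q,p) \<in> graph_edges V N" using sym pq by auto
      then have "p \<in> set (N q)" using E by auto
      then have "d \<gamma>' q \<le> d \<gamma> p + 1" using ch[OF False] by auto
      then show ?thesis using le s gt by auto
    qed
  qed
qed

theorem lemma7:
  fixes V :: "'v set" and N :: "'v \<Rightarrow> 'v list" and r :: 'v
    and \<gamma> \<gamma>' :: "'v config"
  assumes "bfs_graph V N r"
    and "valid_config V N \<gamma>"
    and "d_step V N r \<gamma> \<gamma>'"
  shows "(smooth_d_step N V \<gamma> \<gamma>' \<longrightarrow> (\<forall>k::int. NS V N \<gamma> k = NS V N \<gamma>' k))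
       \<and> (\<not> smooth_d_step N V \<gamma> \<gamma>' \<longrightarrow>
           (let kstar = int (Min {rank \<gamma> (p, q) | p q. (p, q) \<in> graph_edges V N
                                   \<and> \<not> smooth_edge \<gamma> (p, q)
                                   \<and> (d \<gamma>' p \<noteq> d \<gamma> p \<or> d \<gamma>' q \<noteq> d \<gamma> q)})
            in (\<forall>k::int. k < kstar \<longrightarrow> NS V N \<gamma> k = NS V N \<gamma>' k)
               \<and> NS V N \<gamma>' kstar \<subset> NS V N \<gamma> kstar))"
proof -
  let ?E = "graph_edges V N"
  have E: "\<And>p q. (p,q) \<in> ?E \<longleftrightarrow> p \<in> V \<and> q \<in> set (N p)"
    by (simp add: graph_edges_def)
  have G: "finite V" "r \<in> V" "\<And>p. p \<in> V \<Longrightarrow> set (N p) \<subseteq> V"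
    "\<And>p q. p \<in> V \<Longrightarrow> q \<in> V \<Longrightarrow> q \<in> set (N p) \<longleftrightarrow> p \<in> set (N q)"
    "\<And>p. p \<in> V \<Longrightarrow> (r, p) \<in> ?E\<^sup>*"
    using assms(1) unfolding bfs_graph_def by blast+
  have sym: "\<And>p q. (p,q) \<in> ?E \<Longrightarrow> (q,p) \<in> ?E"
    using E G(3,4) by blast
  have ne: "set (N p) \<noteq> {}" if pp: "p \<in> V" "p \<noteq> r" for p
  proof -
    have "(r,p) \<in> ?E\<^sup>*" using G(5) pp by auto
    then obtain y where "(y,p) \<in> ?E" using pp(2) by (auto elim: rtranclE)
    then have "(p,y) \<in> ?E" using sym by auto
    then show ?thesis using E by auto
  qed
  obtain S where S: "S \<subseteq> V" "\<forall>p\<in>S. enabled N r \<gamma> p"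
    "\<forall>p. if p \<in> S then (d \<gamma>' p, par \<gamma>' p) = exec N r \<gamma> p
              else d \<gamma>' p = d \<gamma> p \<and> par \<gamma>' p = par \<gamma> p"
    using assms(3) unfolding d_step_def step_def by blast
  have root: "d \<gamma> r = d \<gamma>' r" using assms(3) unfolding d_step_def by blast
  have ch0: "p \<in> V \<and> p \<noteq> r \<and> d \<gamma>' p = Dist N \<gamma> p" if "d \<gamma>' p \<noteq> d \<gamma> p" for p
  proof -
    have pS: "p \<in> S" using S(3) that by metis
    then have ex: "(d \<gamma>' p, par \<gamma>' p) = exec N r \<gamma> p" using S(3) by metis
    have "p \<noteq> r" using root that by auto
    then show ?thesis using ex that pS S(1) by (auto simp: exec_def split: if_splits)
  qed
  have ch: "\<And>p. d \<gamma>' p \<noteq> d \<gamma> p \<Longrightarrow> p \<in> V \<and> (\<forall>q\<in>set (N p). d \<gamma>' p \<le> d \<gamma> q + 1)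
                 \<and> (\<exists>q\<in>set (N p). d \<gamma>' p = d \<gamma> q + 1)"
  proof -
    fix p assume c: "d \<gamma>' p \<noteq> d \<gamma> p"
    have h: "p \<in> V" "p \<noteq> r" "d \<gamma>' p = Dist N \<gamma> p" using ch0[OF c] by auto
    have eq: "{d \<gamma> q + 1 | q. q \<in> set (N p)} = (\<lambda>q. d \<gamma> q + 1) ` set (N p)" by auto
    have fin: "finite ((\<lambda>q. d \<gamma> q + 1) ` set (N p))" by simp
    have nonemp: "(\<lambda>q. d \<gamma> q + 1) ` set (N p) \<noteq> {}" using ne[OF h(1,2)] by simp
    have D: "d \<gamma>' p = Min ((\<lambda>q. d \<gamma> q + 1) ` set (N p))" using h(3) eq by (simp add: Dist_def)
    show "?thesis p"
      using h(1) D Min_le[OF fin] Min_in[OF fin nonemp] by auto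
  qed
  define chg where "chg = (\<lambda>(x,y). d \<gamma>' x \<noteq> d \<gamma> x \<or> d \<gamma>' y \<noteq> d \<gamma> y)"
  define C where "C = {e \<in> ?E. \<not> smooth_edge \<gamma> e \<and> chg e}"
  have key: "\<exists>e0\<in>C. rank \<gamma> e0 < rank \<gamma>' e"
    if e: "e \<in> ?E" "\<not> smooth_edge \<gamma>' e" "chg e" for e
  proof -
    obtain p q where pq: "e = (p,q)" by (cases e)
    show ?thesis
    proof (cases "d \<gamma>' p \<le> d \<gamma>' q")
      case True
      then have gt: "d \<gamma>' q \<ge> d \<gamma>' p + 2" using e(2) pq by (auto simp: smooth_edge_def)
      obtain x y where xy: "(x,y) \<in> ?E" "\<not> smooth_edge \<gamma> (x,y)"
           "(d \<gamma>' x \<noteq> d \<gamma> x \<or> d \<gamma>' y \<noteq> d \<gamma> y)" "rank \<gamma> (x,y) < d \<gamma>' p"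
        using key_or[OF E sym ch, of p q] e pq gt by (auto simp: chg_def)
      then show ?thesis using True pq
        by (intro bexI[of _ "(x,y)"]) (auto simp: C_def chg_def rank_def)
    next
      case False
      then have gt: "d \<gamma>' p \<ge> d \<gamma>' q + 2" using e(2) pq by (auto simp: smooth_edge_def)
      have qp: "(q,p) \<in> ?E" using sym e(1) pq by auto
      obtain x y where xy: "(x,y) \<in> ?E" "\<not> smooth_edge \<gamma> (x,y)"
           "(d \<gamma>' x \<noteq> d \<gamma> x \<or> d \<gamma>' y \<noteq> d \<gamma> y)" "rank \<gamma> (x,y) < d \<gamma>' q"
        using key_or[OF E sym ch qp gt] e pq by (auto simp: chg_def)
      then show ?thesis using False pq
        by (intro bexI[of _ "(x,y)"]) (auto simp: C_def chg_def rank_def)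
    qed
  qed
  have unch: "smooth_edge \<gamma> e = smooth_edge \<gamma>' e \<and> rank \<gamma> e = rank \<gamma>' e" if "\<not> chg e" for e
    using that by (cases e) (auto simp: chg_def smooth_edge_def rank_def)
  have part1: "\<forall>k::int. NS V N \<gamma> k = NS V N \<gamma>' k" if sm: "smooth_d_step N V \<gamma> \<gamma>'"
  proof -
    have Cemp: "C = {}"
    proof (rule ccontr)
      assume "C \<noteq> {}"
      then obtain p q where pq: "(p,q) \<in> C" by auto
      then have pqE: "(p,q) \<in> ?E" and ns: "\<not> smooth_edge \<gamma> (p,q)" and c: "chg (p,q)"
        by (auto simp: C_def)
      have qpE: "(q,p) \<in> ?E" using sym pqE by auto
      show False
      proof (cases "d \<gamma>' p \<noteq> d \<gamma> p")
        case True
        then show False using sm pqE ns E unfolding smooth_d_step_def by blast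
      next
        case False
        then have "d \<gamma>' q \<noteq> d \<gamma> q" using c by (auto simp: chg_def)
        then have "smooth_edge \<gamma> (q,p)" using sm qpE E unfolding smooth_d_step_def by blast
        then show False using ns by (auto simp: smooth_edge_def)
      qed
    qed
    show ?thesis
    proof
      fix k
      show "NS V N \<gamma> k = NS V N \<gamma>' k"
      proof (rule set_eqI, rule iffI)
        fix e assume "e \<in> NS V N \<gamma> k"
        then have "e \<in> ?E" "\<not> smooth_edge \<gamma> e" "int (rank \<gamma> e) = k" by (auto simp: NS_def)
        moreover have "\<not> chg e" using Cemp calculation unfolding C_def by blast
        ultimately show "e \<in> NS V N \<gamma>' k" using unch by (auto simp: NS_def)
      next
        fix e assume "e \<in> NS V N \<gamma>' k"
        then have "e \<in> ?E" "\<not> smooth_edge \<gamma>' e" "int (rank \<gamma>' e) = k" by (auto simp: NS_def)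
        moreover have "\<not> chg e" using Cemp key calculation by blast
        ultimately show "e \<in> NS V N \<gamma> k" using unch by (auto simp: NS_def)
      qed
    qed
  qed
  have part2: "let kstar = int (Min {rank \<gamma> (p, q) | p q. (p, q) \<in> graph_edges V N
                                   \<and> \<not> smooth_edge \<gamma> (p, q)
                                   \<and> (d \<gamma>' p \<noteq> d \<gamma> p \<or> d \<gamma>' q \<noteq> d \<gamma> q)})
            in (\<forall>k::int. k < kstar \<longrightarrow> NS V N \<gamma> k = NS V N \<gamma>' k)
               \<and> NS V N \<gamma>' kstar \<subset> NS V N \<gamma> kstar" if nsm: "\<not> smooth_d_step N V \<gamma> \<gamma>'"
  proof -
    have seteq: "{rank \<gamma> (p, q) | p q. (p, q) \<in> graph_edges V N
                                   \<and> \<not> smooth_edge \<gamma> (p, q)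
                                   \<and> (d \<gamma>' p \<noteq> d \<gamma> p \<or> d \<gamma>' q \<noteq> d \<gamma> q)} = rank \<gamma> ` C"
      by (auto simp: C_def chg_def image_def)
    have "?E \<subseteq> V \<times> V" using E G(3) by auto
    then have finE: "finite ?E" using G(1) finite_subset by blast
    have finC: "finite C" using finE by (auto simp: C_def)
    obtain p q where "p \<in> V" "d \<gamma>' p \<noteq> d \<gamma> p" "q \<in> set (N p)" "\<not> smooth_edge \<gamma> (p,q)"
      using nsm unfolding smooth_d_step_def by blast
    then have "(p,q) \<in> C" using E by (auto simp: C_def chg_def)
    then have Cne: "C \<noteq> {}" by auto
    define K where "K = Min (rank \<gamma> ` C)"
    have Kle: "\<And>e. e \<in> C \<Longrightarrow> K \<le> rank \<gamma> e" unfolding K_def using finC by simp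
    obtain e0 where e0: "e0 \<in> C" "rank \<gamma> e0 = K"
    proof -
      have "K \<in> rank \<gamma> ` C" unfolding K_def using Min_in[of "rank \<gamma> ` C"] finC Cne by auto
      then show ?thesis using that by auto
    qed
    have sub: "NS V N \<gamma>' k \<subseteq> NS V N \<gamma> k" if "k \<le> int K" for k
    proof
      fix e assume "e \<in> NS V N \<gamma>' k"
      then have h: "e \<in> ?E" "\<not> smooth_edge \<gamma>' e" "int (rank \<gamma>' e) = k" by (auto simp: NS_def)
      have "\<not> chg e"
      proof
        assume "chg e"
        then obtain e1 where "e1 \<in> C" "rank \<gamma> e1 < rank \<gamma>' e" using key h by blast
        then show False using Kle[of e1] h(3) that by auto
      qed
      then show "e \<in> NS V N \<gamma> k" using h unch by (auto simp: NS_def)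
    qed
    have a: "\<forall>k::int. k < int K \<longrightarrow> NS V N \<gamma> k = NS V N \<gamma>' k"
    proof (intro allI impI)
      fix k :: int assume kl: "k < int K"
      have "NS V N \<gamma> k \<subseteq> NS V N \<gamma>' k"
      proof
        fix e assume "e \<in> NS V N \<gamma> k"
        then have h: "e \<in> ?E" "\<not> smooth_edge \<gamma> e" "int (rank \<gamma> e) = k" by (auto simp: NS_def)
        have "\<not> chg e"
        proof
          assume "chg e"
          then have "e \<in> C" using h by (auto simp: C_def)
          then show False using Kle[of e] h(3) kl by auto
        qed
        then show "e \<in> NS V N \<gamma>' k" using h unch by (auto simp: NS_def)
      qed
      then show "NS V N \<gamma> k = NS V N \<gamma>' k" using sub[of k] kl by auto
    qed
    have e0in: "e0 \<in> NS V N \<gamma> (int K)" using e0 by (auto simp: C_def NS_def)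
    have e0out: "e0 \<notin> NS V N \<gamma>' (int K)"
    proof
      assume "e0 \<in> NS V N \<gamma>' (int K)"
      moreover have "chg e0" using e0 by (auto simp: C_def)
      ultimately obtain e1 where "e1 \<in> C" "rank \<gamma> e1 < rank \<gamma>' e0" "int (rank \<gamma>' e0) = int K"
        using key unfolding NS_def by blast
      then show False using Kle[of e1] by auto
    qed
    have b: "NS V N \<gamma>' (int K) \<subset> NS V N \<gamma> (int K)"
      using sub[of "int K"] e0in e0out by auto
    show ?thesis unfolding seteq Let_def K_def[symmetric] using a b by simp
  qed
  show ?thesis using part1 part2 by blast
qed

end
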